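(* Let $p_1<p_2<\dots<p_N$ be positive prime numbers and set $k_i=\sqrt{p_i}$ for $i=1,\dots,N$. For $i\neq j$ define the function $\tilde A_{ij}(x)=\cos((k_i-k_j)x)$ of $x\in\mathbb{R}$, whose (fundamental) period is $t_{ij}=2\pi/|k_i-k_j|$. Let $(i,j)$ and $(i',j')$ be index pairs with $i>j$, $i'>j'$ and $\{i,j\}\neq\{i',j'\}$, and let $t_1=t_{ij}$, $t_2=t_{i'j'}$. Then there exist no nonzero integers $n_1,n_2$ such that $n_1t_1=n_2t_2$.
   Context: The functions $\tilde A_{ij}(x)$ are the entries of $\mathbf{Z}\mathbf{Z}^\top$ where $\mathbf{Z}\in\mathbb{R}^{N\times 2}$ has $i$-th row $(\cos(k_ix),\sin(k_ix))$. *)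

theory Defs
  imports "HOL-Analysis.Analysis"
begin

definition wavenum :: "(nat \<Rightarrow> nat) \<Rightarrow> nat \<Rightarrow> real" where
  "wavenum p i = sqrt (real (p i))"

definition Atilde :: "(nat \<Rightarrow> nat) \<Rightarrow> nat \<Rightarrow> nat \<Rightarrow> real \<Rightarrow> real" where
  "Atilde p i j x = cos ((wavenum p i - wavenum p j) * x)"

definition period :: "(nat \<Rightarrow> nat) \<Rightarrow> nat \<Rightarrow> nat \<Rightarrow> real" where
  "period p i j = 2 * pi / \<bar>wavenum p i - wavenum p j\<bar>"

end

theory Submission
  imports Defs
begin

lemma sqrt_irr:
  fixes P X :: nat
  assumes "prime P" "\<not> P dvd X"
  shows "sqrt (real (P*X)) \<notin> \<rat>"
proof
  from \<open>prime P\<close> have p: "P > 1" by (rule prime_gt_1_nat)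
  assume "sqrt (real (P*X)) \<in> \<rat>"
  then obtain m n :: nat
    where n: "n \<noteq> 0"
      and sqrt_rat: "\<bar>sqrt (real (P*X))\<bar> = m / n"
      and "coprime m n" by (rule Rats_abs_nat_div_natE)
  from n and sqrt_rat have "m = \<bar>sqrt (real (P*X))\<bar> * n" by simp
  then have "m\<^sup>2 = (sqrt (real (P*X)))\<^sup>2 * n\<^sup>2" by (auto simp add: power2_eq_square)
  also have "(sqrt (real (P*X)))\<^sup>2 = real (P*X)" by simp
  finally have "real (m\<^sup>2) = real (P * X * n\<^sup>2)" by simp
  then have eq: "m\<^sup>2 = P * X * n\<^sup>2" by (simp only: of_nat_eq_iff)
  then have "P dvd m\<^sup>2" by simp
  with \<open>prime P\<close> have dvd_m: "P dvd m" by (rule prime_dvd_power)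
  then obtain k where "m = P * k" ..
  with eq have "P * (X * n\<^sup>2) = P * (P * k\<^sup>2)" by (simp add: power2_eq_square) (metis mult.assoc mult.commute)
  with p have "X * n\<^sup>2 = P * k\<^sup>2" by (metis mult_left_cancel not_one_less_zero)
  then have "P dvd X * n\<^sup>2" by (metis dvd_triv_left)
  with \<open>prime P\<close> assms(2) have "P dvd n\<^sup>2" by (simp add: prime_dvd_mult_iff)
  with \<open>prime P\<close> have "P dvd n" by (rule prime_dvd_power)
  with dvd_m have "P dvd gcd m n" by (rule gcd_greatest)
  with \<open>coprime m n\<close> have "P = 1" by simp
  with p show False by simp
qed

lemma L3:
  fixes x y z :: int and P Q R :: nat
  assumes "y \<noteq> 0" "z \<noteq> 0" "x * sqrt P = y * sqrt Q + z * sqrt R"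
  shows "sqrt (real (Q*R)) \<in> \<rat>"
proof -
  have "(x * sqrt P)^2 = (y * sqrt Q + z * sqrt R)^2" using assms(3) by simp
  then have "x^2 * P = y^2 * Q + z^2 * R + 2*y*z*(sqrt Q * sqrt R)"
    by (simp add: power2_eq_square algebra_simps)
  then have "sqrt (real (Q*R)) = (x^2 * P - y^2 * Q - z^2 * R) / (2*y*z)"
    using assms(1,2) by (simp add: real_sqrt_mult field_simps)
  also have "\<dots> \<in> \<rat>" by simp
  finally show ?thesis .
qed

lemma L4:
  fixes u v :: int and A B C D :: nat
  assumes "u \<noteq> 0" "v \<noteq> 0" "u * sqrt A + v * sqrt B = u * sqrt C + v * sqrt D"
  shows "sqrt (real (A*B*C*D)) \<in> \<rat>"
proof -
  have "(u * sqrt A + v * sqrt B)^2 = (u * sqrt C + v * sqrt D)^2" using assms(3) by simp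
  then have "u^2 * A + v^2 * B + 2 * u * v * (sqrt A * sqrt B) = u^2 * C + v^2 * D + 2 * u * v * (sqrt C * sqrt D)"
    by (simp add: power2_eq_square algebra_simps)
  then have s: "sqrt A * sqrt B - sqrt C * sqrt D = (u^2 * C + v^2 * D - u^2 * A - v^2 * B) / (2 * u * v)"
    using assms(1,2) by (simp add: field_simps)
  define s where "s = sqrt A * sqrt B - sqrt C * sqrt D"
  have sr: "s \<in> \<rat>" unfolding s_def s by simp
  have "s^2 = A*B + C*D - 2 * (sqrt A * sqrt B * sqrt C * sqrt D)"
    unfolding s_def by (simp add: power2_eq_square algebra_simps)
  then have "sqrt (real (A*B*C*D)) = (A*B + C*D - s^2)/2"
    by (simp add: real_sqrt_mult)
  also have "\<dots> \<in> \<rat>" using sr by simp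
  finally show ?thesis .
qed

theorem lemma1:
  fixes p :: "nat \<Rightarrow> nat" and N i j i' j' :: nat
  assumes primes: "\<And>m. m \<in> {1..N} \<Longrightarrow> prime (p m)"
    and incr: "\<And>m m'. m \<in> {1..N} \<Longrightarrow> m' \<in> {1..N} \<Longrightarrow> m < m' \<Longrightarrow> p m < p m'"
    and ij: "1 \<le> j" "j < i" "i \<le> N"
    and ij': "1 \<le> j'" "j' < i'" "i' \<le> N"
    and diff: "{i, j} \<noteq> {i', j'}"
  shows "\<not> (\<exists>n1 n2 :: int. n1 \<noteq> 0 \<and> n2 \<noteq> 0 \<and>
            of_int n1 * period p i j = of_int n2 * period p i' j')"
proof
  assume "\<exists>n1 n2 :: int. n1 \<noteq> 0 \<and> n2 \<noteq> 0 \<and>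
            of_int n1 * period p i j = of_int n2 * period p i' j'"
  then obtain n1 n2 :: int where n: "n1 \<noteq> 0" "n2 \<noteq> 0"
    and eq: "of_int n1 * period p i j = of_int n2 * period p i' j'" by blast
  have inj: "p m \<noteq> p m'" if "m \<in> {1..N}" "m' \<in> {1..N}" "m \<noteq> m'" for m m'
    using incr[OF that(1,2)] incr[OF that(2,1)] that(3) by (metis less_irrefl nat_neq_iff)
  define a where "a = p i"
  define b where "b = p j"
  define c where "c = p i'"
  define d where "d = p j'"
  have I: "i \<in> {1..N}" "j \<in> {1..N}" "i' \<in> {1..N}" "j' \<in> {1..N}" using ij ij' by auto
  have pa: "prime a" "prime b" "prime c" "prime d" unfolding a_def b_def c_def d_def
    using primes I by auto
  have ba: "b < a" unfolding a_def b_def using incr I ij by auto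
  have dc: "d < c" unfolding c_def d_def using incr I ij' by auto
  have k1: "sqrt b < sqrt a" using ba by simp
  have k2: "sqrt d < sqrt c" using dc by simp
  have "n1 * (2*pi / (sqrt a - sqrt b)) = n2 * (2*pi / (sqrt c - sqrt d))"
    using eq k1 k2 unfolding period_def wavenum_def a_def b_def c_def d_def by simp
  then have "(2*pi) * (n1 * (sqrt c - sqrt d)) = (2*pi) * (n2 * (sqrt a - sqrt b))"
    using k1 k2 by (simp add: field_simps)
  then have main: "n1 * (sqrt c - sqrt d) = n2 * (sqrt a - sqrt b)"
    using pi_gt_zero by (metis mult_left_cancel pi_neq_zero zero_neq_numeral mult_eq_0_iff)
  have ndvd: "\<not> P dvd Q" if "prime P" "prime Q" "P \<noteq> Q" for P Q :: nat
    using that primes_dvd_imp_eq by blast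
  show False
  proof (cases "i = i'")
    case True
    then have "j \<noteq> j'" using diff by auto
    then have bd: "b \<noteq> d" unfolding b_def d_def using inj I by auto
    have "(n1 - n2) * sqrt a = n1 * sqrt d + (- n2) * sqrt b"
      using main True unfolding a_def c_def by (simp add: algebra_simps)
    then have "sqrt (real (d*b)) \<in> \<rat>" using L3 n by (metis neg_equal_0_iff_equal)
    then show False using sqrt_irr[of d b] pa ndvd bd by metis
  next
    case ii: False
    show False
    proof (cases "j = j'")
      case True
      have ac: "a \<noteq> c" unfolding a_def c_def using inj I ii by auto
      have "(n2 - n1) * sqrt b = n2 * sqrt a + (- n1) * sqrt c"
        using main True unfolding b_def d_def by (simp add: algebra_simps)
      then have "sqrt (real (a*c)) \<in> \<rat>" using L3 n by (metis neg_equal_0_iff_equal)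
      then show False using sqrt_irr[of a c] pa ndvd ac by metis
    next
      case jj: False
      show False
      proof (cases "i = j'")
        case True
        then have ji': "j \<noteq> i'" using ij ij' by auto
        have bc: "b \<noteq> c" unfolding b_def c_def using inj I ji' by auto
        have "(n1 + n2) * sqrt a = n1 * sqrt c + n2 * sqrt b"
          using main True unfolding a_def d_def by (simp add: algebra_simps)
        then have "sqrt (real (c*b)) \<in> \<rat>" using L3 n by metis
        then show False using sqrt_irr[of c b] pa ndvd bc by metis
      next
        case ij2: False
        show False
        proof (cases "j = i'")
          case True
          have ad: "a \<noteq> d" unfolding a_def d_def using inj I ij2 by auto
          have "(n1 + n2) * sqrt b = n2 * sqrt a + n1 * sqrt d"
            using main True unfolding b_def c_def by (simp add: algebra_simps)
          then have "sqrt (real (a*d)) \<in> \<rat>" using L3 n by metis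
          then show False using sqrt_irr[of a d] pa ndvd ad by metis
        next
          case False
          have dist: "a \<noteq> b" "a \<noteq> c" "a \<noteq> d" "b \<noteq> c" "b \<noteq> d" "c \<noteq> d"
            unfolding a_def b_def c_def d_def using inj I ii jj ij2 False ij ij' by auto
          have "n1 * sqrt c + n2 * sqrt b = n1 * sqrt d + n2 * sqrt a"
            using main by (simp add: algebra_simps)
          then have r: "sqrt (real (c*b*d*a)) \<in> \<rat>" using L4 n by metis
          have "\<not> c dvd b*d*a" using pa dist ndvd
            by (simp add: prime_dvd_mult_iff)
          then have "sqrt (real (c*(b*d*a))) \<notin> \<rat>" using sqrt_irr pa by blast
          then show False using r by (simp add: mult.assoc)
        qed
      qed
    qed
  qed
qed

end
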